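(* Let $n\ge2$, let $u=(u_{ij})$ be Haar-distributed on $O_n$, and let $x=u_{ij}$, $y=u_{kl}$ with $i\ne k$ and $j\ne l$. For $\alpha,\beta\in\mathbb N$ both even, $$\int_{O_n}x^\alpha y^\beta\,du=\frac{(n-2)!\;\alpha!!\;\beta!!\;(\alpha+\beta+n-2)!!}{(\alpha+n-2)!!\,(\beta+n-2)!!\,(\alpha+\beta+n-1)!!},$$ and if $\alpha$ or $\beta$ is odd the integral vanishes.
   Context: Double factorial convention (non-standard): for an integer $m\ge0$, $m!!=(m-1)(m-3)\cdots$, the product of the positive integers $\le m-1$ of the parity of $m-1$ (empty product $=1$); $(n-2)!$ is the ordinary factorial. $du$ is the Haar probability measure on $O_n$. *)

theory Defs
  imports "HOL-Probability.Probability"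
begin

text \<open>Paper's (shifted) double factorial: m!! = (m-1)(m-3)..., the product of the
positive integers \<le> m-1 having the parity of m-1 (empty product = 1).\<close>
definition dfact :: "nat \<Rightarrow> real" where
  "dfact m = (\<Prod>k\<in>{k. 0 < k \<and> k + 1 \<le> m \<and> odd (k + m)}. real k)"

definition haar_orthogonal :: "(real^'n^'n) measure \<Rightarrow> bool" where
  "haar_orthogonal \<mu> \<longleftrightarrow>
     prob_space \<mu> \<and> sets \<mu> = sets borel \<and>
     (AE M in \<mu>. orthogonal_matrix M) \<and>
     (\<forall>U. orthogonal_matrix U \<longrightarrow> distr \<mu> borel (\<lambda>M. U ** M) = \<mu>)"

end

theory Submission
  imports Defs
begin

lemma dfact_step: "dfact (m + 2) = real (m + 1) * dfact m"
proof -
  have e: "{k. 0 < k \<and> k + 1 \<le> m + 2 \<and> odd (k + (m + 2))} = insert (m+1) {k. 0 < k \<and> k + 1 \<le> m \<and> odd (k + m)}"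
    by auto presburger+
  have f: "finite {k. 0 < k \<and> k + 1 \<le> m \<and> odd (k + m)}" by (rule finite_subset[of _ "{..m}"]) auto
  show ?thesis unfolding dfact_def e using f by (subst prod.insert) auto
qed

lemma dfact_pos: "dfact m > 0"
  unfolding dfact_def by (rule prod_pos) auto

lemma dfact_0: "dfact 0 = 1"
proof -
  have "{k::nat. 0 < k \<and> k + 1 \<le> 0 \<and> odd (k + 0)} = {}" by auto
  then show ?thesis unfolding dfact_def by simp
qed
lemma dfact_1: "dfact 1 = 1"
proof -
  have e: "{k::nat. 0 < k \<and> k + 1 \<le> 1 \<and> odd (k + 1)} = {}" by auto
  show ?thesis unfolding dfact_def by (simp only: e prod.empty)
qed

lemma dfact_fact: "dfact (m+1) * dfact m = fact m"
proof (induction m)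
  case 0 then show ?case using dfact_0 dfact_1 by simp
next
  case (Suc m)
  have "dfact (Suc m + 1) = real (m+1) * dfact m" using dfact_step[of m] by simp
  then show ?case using Suc by (simp add: algebra_simps)
qed

definition rot :: "'n \<Rightarrow> 'n \<Rightarrow> real \<Rightarrow> real^'n^'n" where
 "rot p q t = (\<chi> a b. if a = p then (if b = p then cos t else 0) + (if b = q then sin t else 0)
      else if a = q then (if b = p then - sin t else 0) + (if b = q then cos t else 0)
      else (if b = a then 1 else 0))"

lemma rot_mult: "p \<noteq> q \<Longrightarrow> (rot p q t ** M) $ a $ b = (if a = p then cos t * M$p$b + sin t * M$q$b
   else if a = q then - sin t * M$p$b + cos t * M$q$b else M$a$b)"
  by (auto simp: rot_def matrix_matrix_mult_def distrib_right sum.distrib if_distrib[of "\<lambda>x. x * _"] cong: if_cong)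

lemma rot_transpose: "p \<noteq> q \<Longrightarrow> transpose (rot p q t) = rot p q (-t)"
  by (auto simp: rot_def transpose_def vec_eq_iff)

lemma rot_orth: "p \<noteq> q \<Longrightarrow> orthogonal_matrix (rot p q t)"
proof -
  assume pq: "p \<noteq> q"
  have "rot p q (-t) ** rot p q t = mat 1"
    unfolding vec_eq_iff rot_mult[OF pq]
    by (auto simp: rot_def mat_def pq pq[symmetric]) (simp_all add: power2_eq_square[symmetric])
  then show ?thesis unfolding orthogonal_matrix rot_transpose[OF pq] .
qed

lemma rot0: "p \<noteq> q \<Longrightarrow> rot p q 0 ** M = M"
  by (auto simp: vec_eq_iff rot_mult)

lemma cont_mult: "continuous_on UNIV (\<lambda>M::real^'n^'n. U ** M)"
  unfolding matrix_matrix_mult_def by (intro continuous_intros)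

lemma haar_inv:
  fixes f :: "real^'n^'n \<Rightarrow> real"
  assumes H: "haar_orthogonal \<mu>" and U: "orthogonal_matrix U" and f: "f \<in> borel_measurable borel"
  shows "(\<integral>M. f (U ** M) \<partial>\<mu>) = (\<integral>M. f M \<partial>\<mu>)"
proof -
  have s: "sets \<mu> = sets borel" using H unfolding haar_orthogonal_def by auto
  have d: "distr \<mu> borel (\<lambda>M. U ** M) = \<mu>" using H U unfolding haar_orthogonal_def by auto
  have m: "(\<lambda>M. U ** M) \<in> measurable \<mu> borel"
    using borel_measurable_continuous_onI[OF cont_mult] measurable_cong_sets[OF s refl] by auto
  have "integral\<^sup>L (distr \<mu> borel (\<lambda>M. U ** M)) f = (\<integral>M. f (U ** M) \<partial>\<mu>)"
    by (rule integral_distr[OF m f])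
  then show ?thesis using d by simp
qed

lemma haar_basic:
  assumes H: "haar_orthogonal \<mu>"
  shows "prob_space \<mu>" "sets \<mu> = sets borel" "AE M in \<mu>. orthogonal_matrix M"
  using H unfolding haar_orthogonal_def by auto

lemma cont_meas:
  fixes h :: "real^'n^'n \<Rightarrow> real"
  assumes H: "haar_orthogonal \<mu>" and c: "continuous_on UNIV h"
  shows "h \<in> borel_measurable \<mu>"
  using borel_measurable_continuous_onI[OF c] measurable_cong_sets[OF haar_basic(2)[OF H] refl] by auto

lemma bounded_int:
  fixes h :: "real^'n^'n \<Rightarrow> real"
  assumes H: "haar_orthogonal \<mu>" and c: "continuous_on UNIV h"
    and b: "\<And>N. orthogonal_matrix N \<Longrightarrow> \<bar>h N\<bar> \<le> C"
  shows "integrable \<mu> h"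
proof -
  interpret prob_space \<mu> using haar_basic[OF H] by auto
  show ?thesis
  proof (rule integrable_const_bound[where B=C])
    show "AE x in \<mu>. norm (h x) \<le> C" using haar_basic(3)[OF H] by eventually_elim (use b in auto)
    show "h \<in> borel_measurable \<mu>" by (rule cont_meas[OF H c])
  qed
qed

lemma gen_zero:
  fixes f g :: "real^'n^'n \<Rightarrow> real"
  assumes H: "haar_orthogonal \<mu>" and pq: "p \<noteq> q"
  and fc: "continuous_on UNIV f" and gc: "continuous_on UNIV g"
  and der: "\<And>M s. ((\<lambda>t. f (rot p q t ** M)) has_real_derivative g (rot p q s ** M)) (at s)"
  and fb: "\<And>N. orthogonal_matrix N \<Longrightarrow> \<bar>f N\<bar> \<le> C"
  and gb: "\<And>N. orthogonal_matrix N \<Longrightarrow> \<bar>g N\<bar> \<le> C"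
  shows "(\<integral>M. g M \<partial>\<mu>) = 0"
proof -
  interpret prob_space \<mu> using haar_basic[OF H] by auto
  have ae: "AE M in \<mu>. orthogonal_matrix M" using haar_basic[OF H] by auto
  define h where "h m = inverse (real (Suc m))" for m
  have hpos: "h m > 0" for m unfolding h_def by auto
  define S where "S m M = (f (rot p q (h m) ** M) - f M) / h m" for m M
  have cf2: "continuous_on UNIV (\<lambda>M. f (rot p q t ** M))" for t
    by (rule continuous_on_compose2[OF fc cont_mult]) auto
  have contS: "continuous_on UNIV (S m)" for m
    unfolding S_def using hpos[of m] by (intro continuous_intros cf2 fc) auto
  have intf: "integrable \<mu> f" by (rule bounded_int[OF H fc fb])
  have intf2: "integrable \<mu> (\<lambda>M. f (rot p q t ** M))" for t
    by (rule bounded_int[OF H cf2, where C=C]) (intro fb orthogonal_matrix_mul rot_orth pq, assumption)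
  have S0: "(\<integral>M. S m M \<partial>\<mu>) = 0" for m
  proof -
    have "(\<integral>M. S m M \<partial>\<mu>) = ((\<integral>M. f (rot p q (h m) ** M) \<partial>\<mu>) - (\<integral>M. f M \<partial>\<mu>)) / h m"
      unfolding S_def by (simp add: Bochner_Integration.integral_diff[OF intf2 intf])
    also have "\<dots> = 0"
      using haar_inv[OF H rot_orth[OF pq] borel_measurable_continuous_onI[OF fc]] by simp
    finally show ?thesis .
  qed
  have lim: "AE M in \<mu>. (\<lambda>m. S m M) \<longlonglongrightarrow> g M"
  proof (rule AE_I2)
    fix M
    let ?F = "\<lambda>t. f (rot p q t ** M)"
    have "((\<lambda>y. (?F y - ?F 0) / (y - 0)) \<longlongrightarrow> g (rot p q 0 ** M)) (at 0)"
      using der[of M 0] unfolding has_field_derivative_iff by simp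
    then have "((\<lambda>y. (?F y - ?F 0) / (y - 0)) \<circ> h) \<longlonglongrightarrow> g (rot p q 0 ** M)"
      unfolding tendsto_at_iff_sequentially using hpos LIMSEQ_inverse_real_of_nat
      by (auto simp: h_def[abs_def] less_irrefl)
    then show "(\<lambda>m. S m M) \<longlonglongrightarrow> g M"
      by (simp add: S_def o_def rot0[OF pq])
  qed
  have bound: "AE M in \<mu>. norm (S m M) \<le> C" for m
    using ae
  proof eventually_elim
    case (elim M)
    obtain z where z: "0 < z" "z < h m" "f (rot p q (h m) ** M) - f (rot p q 0 ** M) = (h m - 0) * g (rot p q z ** M)"
      using MVT2[OF hpos[of m], of "\<lambda>t. f (rot p q t ** M)" "\<lambda>s. g (rot p q s ** M)"] der by blast
    then have "S m M = g (rot p q z ** M)" using hpos[of m] by (simp add: S_def rot0[OF pq])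
    then show ?case using gb[OF orthogonal_matrix_mul[OF rot_orth[OF pq] elim]] by simp
  qed
  have "(\<lambda>m. \<integral>M. S m M \<partial>\<mu>) \<longlonglongrightarrow> (\<integral>M. g M \<partial>\<mu>)"
    by (rule integral_dominated_convergence[where w="\<lambda>_. C", OF cont_meas[OF H gc] cont_meas[OF H contS] integrable_const lim bound])
  then show ?thesis using S0 LIMSEQ_unique[OF _ tendsto_const[of 0]] by simp
qed

lemma orth_col: "orthogonal_matrix (M::real^'n^'n) \<Longrightarrow> (\<Sum>r\<in>UNIV. M$r$p * M$r$q) = (if p = q then 1 else 0)"
proof -
  assume "orthogonal_matrix M"
  then have "transpose M ** M = mat 1" by (simp add: orthogonal_matrix)
  then have "(transpose M ** M)$p$q = (mat 1 :: real^'n^'n)$p$q" by simp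
  then show ?thesis by (simp add: matrix_matrix_mult_def transpose_def mat_def)
qed

lemma orth_bound: "orthogonal_matrix (M::real^'n^'n) \<Longrightarrow> \<bar>M$a$b\<bar> \<le> 1"
proof -
  assume o: "orthogonal_matrix M"
  have "M$a$b * M$a$b \<le> (\<Sum>r\<in>UNIV. M$r$b * M$r$b)" by (rule member_le_sum) auto
  then have "M$a$b^2 \<le> 1" using orth_col[OF o, of b b] by (simp add: power2_eq_square)
  then show ?thesis using abs_square_le_1 by blast
qed

lemma ab1: "\<bar>x::real\<bar> \<le> 1 \<Longrightarrow> \<bar>y\<bar> \<le> 1 \<Longrightarrow> \<bar>x*y\<bar> \<le> 1"
  by (simp add: abs_mult mult_le_one)
lemma ab2: "\<bar>x::real\<bar> \<le> 1 \<Longrightarrow> \<bar>x^n\<bar> \<le> 1"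
  by (simp add: power_abs power_le_one)
lemma ab3: "\<bar>x::real\<bar> \<le> 1 \<Longrightarrow> \<bar>real k * x\<bar> \<le> real k"
  by (simp add: abs_mult mult_left_le)

lemma d_u: "((\<lambda>t. cos t * A + sin t * B) has_real_derivative (- sin t * A + cos t * B)) (at t)"
  by (auto intro!: derivative_eq_intros simp: algebra_simps)
lemma d_v: "((\<lambda>t. - sin t * A + cos t * B) has_real_derivative - (cos t * A + sin t * B)) (at t)"
  by (auto intro!: derivative_eq_intros simp: algebra_simps)

lemma der_R1:
  fixes u v w y :: "real \<Rightarrow> real"
  assumes du: "(u has_real_derivative v s) (at s)" and dv: "(v has_real_derivative - u s) (at s)"
      and dw: "(w has_real_derivative y s) (at s)"
  shows "((\<lambda>t. u t^(a+1) * w t^e * v t) has_real_derivative (real (a+1)*u s^a* v s*w s^e* v s + real e*u s^(a+1)*w s^(e-1)*y s* v s - u s^(a+1)*w s^e*u s)) (at s)"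
proof -
  have "((\<lambda>t. u t^(a+1) * w t^e * v t) has_real_derivative ((of_nat (a+1) * (v s * u s^(a+1 - Suc 0))) * w s^e + (of_nat e * (y s * w s^(e - Suc 0))) * u s^(a+1)) * v s + (- u s) * (u s^(a+1) * w s^e)) (at s)"
    by (intro DERIV_mult DERIV_power du dv dw)
  then show ?thesis by (rule DERIV_cong) (simp add: algebra_simps)
qed

lemma pow_pred: "real e * (z::real)^(e-1) * z = real e * z^e"
  by (cases e) auto

lemma R1_single:
  fixes \<mu> :: "(real^'n^'n) measure"
  assumes H: "haar_orthogonal \<mu>" and ri: "r \<noteq> i"
  shows "integrable \<mu> (\<lambda>N. real (a+1)*N$i$j^a*N$r$j*N$i$l^e*N$r$j + real e*N$i$j^(a+1)*N$i$l^(e-1)*N$r$l*N$r$j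
            - N$i$j^(a+1)*N$i$l^e*N$i$j)"
    "(\<integral>N. real (a+1)*N$i$j^a*N$r$j*N$i$l^e*N$r$j + real e*N$i$j^(a+1)*N$i$l^(e-1)*N$r$l*N$r$j
            - N$i$j^(a+1)*N$i$l^e*N$i$j \<partial>\<mu>) = 0"
proof -
  have ir: "i \<noteq> r" using ri by auto
  define f :: "real^'n^'n \<Rightarrow> real" where "f N = N$i$j^(a+1)*N$i$l^e*N$r$j" for N
  define g :: "real^'n^'n \<Rightarrow> real" where "g N = real (a+1)*N$i$j^a*N$r$j*N$i$l^e*N$r$j + real e*N$i$j^(a+1)*N$i$l^(e-1)*N$r$l*N$r$j
            - N$i$j^(a+1)*N$i$l^e*N$i$j" for N
  have gc: "continuous_on UNIV g" unfolding g_def[abs_def] by (intro continuous_intros)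
  have gb: "\<bar>g N\<bar> \<le> real a + real e + 2" if "orthogonal_matrix N" for N
  proof -
    have b: "\<bar>N$p$q\<bar> \<le> 1" for p q by (rule orth_bound[OF that])
    have 1: "\<bar>real (a+1)*(N$i$j^a*N$r$j*N$i$l^e*N$r$j)\<bar> \<le> real (a+1)" by (intro ab3 ab1 ab2 b)
    have 2: "\<bar>real e*(N$i$j^(a+1)*N$i$l^(e-1)*N$r$l*N$r$j)\<bar> \<le> real e" by (intro ab3 ab1 ab2 b)
    have 3: "\<bar>N$i$j^(a+1)*N$i$l^e*N$i$j\<bar> \<le> 1" by (intro ab1 ab2 b)
    show ?thesis unfolding g_def using 1 2 3 by (simp add: mult.assoc)
  qed
  have "integrable \<mu> g" by (rule bounded_int[OF H gc gb])
  then show "integrable \<mu> (\<lambda>N. real (a+1)*N$i$j^a*N$r$j*N$i$l^e*N$r$j + real e*N$i$j^(a+1)*N$i$l^(e-1)*N$r$l*N$r$j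
            - N$i$j^(a+1)*N$i$l^e*N$i$j)" unfolding g_def .
  have "(\<integral>N. g N \<partial>\<mu>) = 0"
  proof (rule gen_zero[where f=f and g=g and C="real a + real e + 2", OF H ir _ gc])
    show "continuous_on UNIV f" unfolding f_def[abs_def] by (intro continuous_intros)
    show "((\<lambda>t. f (rot i r t ** M)) has_real_derivative g (rot i r s ** M)) (at s)" for M s
    proof -
      have D: "((\<lambda>t. (cos t * M$i$j + sin t * M$r$j)^(a+1) * (cos t * M$i$l + sin t * M$r$l)^e * (- sin t * M$i$j + cos t * M$r$j))
         has_real_derivative (real (a+1)*(cos s * M$i$j + sin s * M$r$j)^a*(- sin s * M$i$j + cos s * M$r$j)*(cos s * M$i$l + sin s * M$r$l)^e*(- sin s * M$i$j + cos s * M$r$j)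
          + real e*(cos s * M$i$j + sin s * M$r$j)^(a+1)*(cos s * M$i$l + sin s * M$r$l)^(e-1)*(- sin s * M$i$l + cos s * M$r$l)*(- sin s * M$i$j + cos s * M$r$j)
          - (cos s * M$i$j + sin s * M$r$j)^(a+1)*(cos s * M$i$l + sin s * M$r$l)^e*(cos s * M$i$j + sin s * M$r$j))) (at s)"
        by (rule der_R1[where u="\<lambda>t. cos t * M$i$j + sin t * M$r$j" and v="\<lambda>t. - sin t * M$i$j + cos t * M$r$j"
             and w="\<lambda>t. cos t * M$i$l + sin t * M$r$l" and y="\<lambda>t. - sin t * M$i$l + cos t * M$r$l", OF d_u d_v d_u])
      show ?thesis unfolding f_def g_def rot_mult[OF ir] using ri ir D by simp
    qed
    show "\<bar>f N\<bar> \<le> real a + real e + 2" if "orthogonal_matrix N" for N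
    proof -
      have "\<bar>f N\<bar> \<le> 1" unfolding f_def by (intro ab1 ab2 orth_bound[OF that])
      then show ?thesis by simp
    qed
  qed (rule gb)
  then show "(\<integral>N. real (a+1)*N$i$j^a*N$r$j*N$i$l^e*N$r$j + real e*N$i$j^(a+1)*N$i$l^(e-1)*N$r$l*N$r$j
            - N$i$j^(a+1)*N$i$l^e*N$i$j \<partial>\<mu>) = 0" unfolding g_def .
qed

lemma mono_int:
  fixes \<mu> :: "(real^'n^'n) measure"
  assumes H: "haar_orthogonal \<mu>"
  shows "integrable \<mu> (\<lambda>N. N$i$j^a * N$i$l^e * N$k$l^b)"
  by (rule bounded_int[OF H, where C=1]) (intro continuous_intros, intro ab1 ab2 orth_bound)

lemma R1:
  fixes \<mu> :: "(real^'n^'n) measure"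
  assumes H: "haar_orthogonal \<mu>" and jl: "j \<noteq> l"
  shows "(real a + real e + real CARD('n)) * (\<integral>N. N$i$j^(a+2) * N$i$l^e * N$i$l^0 \<partial>\<mu>)
        = real (a+1) * (\<integral>N. N$i$j^a * N$i$l^e * N$i$l^0 \<partial>\<mu>)"
proof -
  let ?g = "\<lambda>r N. real (a+1)*N$i$j^a*N$r$j*N$i$l^e*N$r$j + real e*N$i$j^(a+1)*N$i$l^(e-1)*N$r$l*N$r$j
            - N$i$j^(a+1)*N$i$l^e*N$i$j"
  let ?R = "UNIV - {i}"
  have cardR: "real (card ?R) = real CARD('n) - 1"
    by (simp add: card_Diff_singleton of_nat_diff card_ge_0_finite Suc_le_eq)
  have "(\<integral>N. (\<Sum>r\<in>?R. ?g r N) \<partial>\<mu>) = (\<Sum>r\<in>?R. (\<integral>N. ?g r N \<partial>\<mu>))"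
    by (rule Bochner_Integration.integral_sum) (rule R1_single(1)[OF H], auto)
  also have "\<dots> = 0" using R1_single(2)[OF H] by simp
  finally have Z: "(\<integral>N. (\<Sum>r\<in>?R. ?g r N) \<partial>\<mu>) = 0" .
  have pw: "(\<Sum>r\<in>?R. ?g r N) = real (a+1) * (N$i$j^a * N$i$l^e * N$i$l^0)
      - (real a + real e + real CARD('n)) * (N$i$j^(a+2) * N$i$l^e * N$i$l^0)" if o: "orthogonal_matrix N" for N
  proof -
    have s1: "(\<Sum>r\<in>?R. N$r$j*N$r$j) = 1 - N$i$j*N$i$j"
      using orth_col[OF o, of j j] sum.remove[of UNIV i "\<lambda>r. N$r$j*N$r$j"] by simp
    have s2: "(\<Sum>r\<in>?R. N$r$l*N$r$j) = 0 - N$i$l*N$i$j"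
      using orth_col[OF o, of l j] sum.remove[of UNIV i "\<lambda>r. N$r$l*N$r$j"] jl by simp
    have "(\<Sum>r\<in>?R. ?g r N) = real (a+1)*N$i$j^a*N$i$l^e*(\<Sum>r\<in>?R. N$r$j*N$r$j)
          + real e*N$i$j^(a+1)*N$i$l^(e-1)*(\<Sum>r\<in>?R. N$r$l*N$r$j) - real (card ?R) * (N$i$j^(a+1)*N$i$l^e*N$i$j)"
      by (simp add: sum_subtractf sum.distrib sum_distrib_left mult_ac)
    also have "\<dots> = real (a+1)*N$i$j^a*N$i$l^e*(1 - N$i$j*N$i$j)
          - (real e*N$i$l^(e-1)*N$i$l)*N$i$j^(a+1)*N$i$j - (real CARD('n) - 1) * (N$i$j^(a+1)*N$i$l^e*N$i$j)"
      unfolding s1 s2 cardR by (simp add: algebra_simps)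
    also have "\<dots> = real (a+1) * (N$i$j^a * N$i$l^e * N$i$l^0)
      - (real a + real e + real CARD('n)) * (N$i$j^(a+2) * N$i$l^e * N$i$l^0)"
      unfolding pow_pred by (simp add: algebra_simps power2_eq_square)
    finally show ?thesis .
  qed
  have "(\<integral>N. (\<Sum>r\<in>?R. ?g r N) \<partial>\<mu>) = (\<integral>N. real (a+1) * (N$i$j^a * N$i$l^e * N$i$l^0)
      - (real a + real e + real CARD('n)) * (N$i$j^(a+2) * N$i$l^e * N$i$l^0) \<partial>\<mu>)"
    apply (rule integral_cong_AE)
    apply (rule cont_meas[OF H], intro continuous_intros)
    apply (rule cont_meas[OF H], intro continuous_intros)
    using haar_basic(3)[OF H] by eventually_elim (rule pw)
  also have "\<dots> = real (a+1) * (\<integral>N. N$i$j^a * N$i$l^e * N$i$l^0 \<partial>\<mu>)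
      - (real a + real e + real CARD('n)) * (\<integral>N. N$i$j^(a+2) * N$i$l^e * N$i$l^0 \<partial>\<mu>)"
    using Bochner_Integration.integral_diff[OF integrable_mult_right[OF mono_int[OF H, of i j a l e i 0]]
          integrable_mult_right[OF mono_int[OF H, of i j "a+2" l e i 0]]]
    by (simp only: integral_mult_right_zero)
  finally show ?thesis using Z by simp
qed

lemma der_R2:
  fixes u v :: "real \<Rightarrow> real"
  assumes du: "(u has_real_derivative v s) (at s)" and dv: "(v has_real_derivative - u s) (at s)"
  shows "((\<lambda>t. K * u t^(b+1) * v t) has_real_derivative K*(real (b+1)*u s^b* v s* v s - u s^(b+1)*u s)) (at s)"
proof -
  have "((\<lambda>t. K * u t^(b+1) * v t) has_real_derivative (0 * u s^(b+1) + (of_nat (b+1) * (v s * u s^(b+1 - Suc 0))) * K) * v s + (- u s) * (K * u s^(b+1))) (at s)"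
    by (intro DERIV_mult DERIV_power du dv DERIV_const)
  then show ?thesis by (rule DERIV_cong) (simp add: algebra_simps)
qed

lemma R2_single:
  fixes \<mu> :: "(real^'n^'n) measure"
  assumes H: "haar_orthogonal \<mu>" and ri: "r \<noteq> i" and rk: "r \<noteq> k" and ik: "i \<noteq> k"
  shows "integrable \<mu> (\<lambda>N. N$i$j^a*N$i$l^e*(real (b+1)*N$k$l^b*N$r$l*N$r$l - N$k$l^(b+1)*N$k$l))"
    "(\<integral>N. N$i$j^a*N$i$l^e*(real (b+1)*N$k$l^b*N$r$l*N$r$l - N$k$l^(b+1)*N$k$l) \<partial>\<mu>) = 0"
proof -
  have kr: "k \<noteq> r" using rk by auto
  define f :: "real^'n^'n \<Rightarrow> real" where "f N = N$i$j^a * N$i$l^e * N$k$l^(b+1) * N$r$l" for N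
  define g :: "real^'n^'n \<Rightarrow> real" where "g N = N$i$j^a*N$i$l^e*(real (b+1)*N$k$l^b*N$r$l*N$r$l - N$k$l^(b+1)*N$k$l)" for N
  have gc: "continuous_on UNIV g" unfolding g_def[abs_def] by (intro continuous_intros)
  have gb: "\<bar>g N\<bar> \<le> real b + 2" if "orthogonal_matrix N" for N
  proof -
    have b: "\<bar>N$p$q\<bar> \<le> 1" for p q by (rule orth_bound[OF that])
    have 0: "\<bar>N$i$j^a*N$i$l^e\<bar> \<le> 1" by (intro ab1 ab2 b)
    have 1: "\<bar>real (b+1)*(N$k$l^b*N$r$l*N$r$l)\<bar> \<le> real (b+1)" by (intro ab3 ab1 ab2 b)
    have 3: "\<bar>N$k$l^(b+1)*N$k$l\<bar> \<le> 1" by (intro ab1 ab2 b)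
    have "\<bar>real (b+1)*(N$k$l^b*N$r$l*N$r$l) - N$k$l^(b+1)*N$k$l\<bar> \<le> real b + 2" using 1 3 by linarith
    then have "\<bar>N$i$j^a*N$i$l^e\<bar> * \<bar>real (b+1)*(N$k$l^b*N$r$l*N$r$l) - N$k$l^(b+1)*N$k$l\<bar> \<le> 1 * (real b + 2)"
      using 0 by (intro mult_mono) auto
    then show ?thesis unfolding g_def by (simp add: abs_mult mult.assoc)
  qed
  have "integrable \<mu> g" by (rule bounded_int[OF H gc gb])
  then show "integrable \<mu> (\<lambda>N. N$i$j^a*N$i$l^e*(real (b+1)*N$k$l^b*N$r$l*N$r$l - N$k$l^(b+1)*N$k$l))" unfolding g_def .
  have "(\<integral>N. g N \<partial>\<mu>) = 0"
  proof (rule gen_zero[where f=f and g=g and C="real b + 2", OF H kr _ gc])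
    show "continuous_on UNIV f" unfolding f_def[abs_def] by (intro continuous_intros)
    show "((\<lambda>t. f (rot k r t ** M)) has_real_derivative g (rot k r s ** M)) (at s)" for M s
    proof -
      have D: "((\<lambda>t. (M$i$j^a * M$i$l^e) * (cos t * M$k$l + sin t * M$r$l)^(b+1) * (- sin t * M$k$l + cos t * M$r$l))
         has_real_derivative (M$i$j^a * M$i$l^e)*(real (b+1)*(cos s * M$k$l + sin s * M$r$l)^b*(- sin s * M$k$l + cos s * M$r$l)*(- sin s * M$k$l + cos s * M$r$l)
          - (cos s * M$k$l + sin s * M$r$l)^(b+1)*(cos s * M$k$l + sin s * M$r$l))) (at s)"
        by (rule der_R2[where u="\<lambda>t. cos t * M$k$l + sin t * M$r$l" and v="\<lambda>t. - sin t * M$k$l + cos t * M$r$l", OF d_u d_v])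
      show ?thesis unfolding f_def g_def rot_mult[OF kr] using ri rk ik kr D by (simp add: mult.assoc)
    qed
    show "\<bar>f N\<bar> \<le> real b + 2" if "orthogonal_matrix N" for N
    proof -
      have "\<bar>f N\<bar> \<le> 1" unfolding f_def by (intro ab1 ab2 orth_bound[OF that])
      then show ?thesis by simp
    qed
  qed (rule gb)
  then show "(\<integral>N. N$i$j^a*N$i$l^e*(real (b+1)*N$k$l^b*N$r$l*N$r$l - N$k$l^(b+1)*N$k$l) \<partial>\<mu>) = 0" unfolding g_def .
qed

lemma R2:
  fixes \<mu> :: "(real^'n^'n) measure"
  assumes H: "haar_orthogonal \<mu>" and ik: "i \<noteq> k" and n2: "CARD('n) \<ge> 2"
  shows "(real b + real CARD('n) - 1) * (\<integral>N. N$i$j^a * N$i$l^e * N$k$l^(b+2) \<partial>\<mu>)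
        = real (b+1) * ((\<integral>N. N$i$j^a * N$i$l^e * N$k$l^b \<partial>\<mu>) - (\<integral>N. N$i$j^a * N$i$l^(e+2) * N$k$l^b \<partial>\<mu>))"
proof -
  let ?g = "\<lambda>r N. N$i$j^a*N$i$l^e*(real (b+1)*N$k$l^b*N$r$l*N$r$l - N$k$l^(b+1)*N$k$l)"
  let ?R = "UNIV - {i} - {k}"
  have cardR: "real (card ?R) = real CARD('n) - 2"
    using n2 ik by (simp add: card_Diff_singleton of_nat_diff)
  have "(\<integral>N. (\<Sum>r\<in>?R. ?g r N) \<partial>\<mu>) = (\<Sum>r\<in>?R. (\<integral>N. ?g r N \<partial>\<mu>))"
    by (rule Bochner_Integration.integral_sum) (rule R2_single(1)[OF H _ _ ik], auto)
  also have "\<dots> = 0" using R2_single(2)[OF H _ _ ik] by simp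
  finally have Z: "(\<integral>N. (\<Sum>r\<in>?R. ?g r N) \<partial>\<mu>) = 0" .
  have pw: "(\<Sum>r\<in>?R. ?g r N) = real (b+1) * (N$i$j^a * N$i$l^e * N$k$l^b)
      - real (b+1) * (N$i$j^a * N$i$l^(e+2) * N$k$l^b)
      - (real b + real CARD('n) - 1) * (N$i$j^a * N$i$l^e * N$k$l^(b+2))" if o: "orthogonal_matrix N" for N
  proof -
    have s0: "(\<Sum>r\<in>UNIV - {i}. N$r$l*N$r$l) = 1 - N$i$l*N$i$l"
      using orth_col[OF o, of l l] sum.remove[of UNIV i "\<lambda>r. N$r$l*N$r$l"] by simp
    have s1: "(\<Sum>r\<in>?R. N$r$l*N$r$l) = 1 - N$i$l*N$i$l - N$k$l*N$k$l"
      using s0 sum.remove[of "UNIV - {i}" k "\<lambda>r. N$r$l*N$r$l"] ik by simp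
    have "(\<Sum>r\<in>?R. ?g r N) = (\<Sum>r\<in>?R. (N$i$j^a*N$i$l^e*(real (b+1)*N$k$l^b)) * (N$r$l*N$r$l) - N$i$j^a*N$i$l^e*(N$k$l^(b+1)*N$k$l))"
      by (rule sum.cong) (simp_all add: algebra_simps)
    also have "\<dots> = (N$i$j^a*N$i$l^e*(real (b+1)*N$k$l^b)) * (\<Sum>r\<in>?R. N$r$l*N$r$l) - real (card ?R) * (N$i$j^a*N$i$l^e*(N$k$l^(b+1)*N$k$l))"
      by (simp add: sum_subtractf sum_distrib_left[symmetric])
    also have "\<dots> = N$i$j^a*N$i$l^e*(real (b+1)*N$k$l^b*(\<Sum>r\<in>?R. N$r$l*N$r$l)
           - real (card ?R) * (N$k$l^(b+1)*N$k$l))"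
      by (simp add: algebra_simps)
    also have "\<dots> = N$i$j^a*N$i$l^e*(real (b+1)*N$k$l^b*(1 - N$i$l*N$i$l - N$k$l*N$k$l)
           - (real CARD('n) - 2) * (N$k$l^(b+1)*N$k$l))"
      unfolding s1 cardR ..
    also have "\<dots> = real (b+1) * (N$i$j^a * N$i$l^e * N$k$l^b)
      - real (b+1) * (N$i$j^a * N$i$l^(e+2) * N$k$l^b)
      - (real b + real CARD('n) - 1) * (N$i$j^a * N$i$l^e * N$k$l^(b+2))"
      by (simp add: algebra_simps power2_eq_square)
    finally show ?thesis .
  qed
  have "(\<integral>N. (\<Sum>r\<in>?R. ?g r N) \<partial>\<mu>) = (\<integral>N. real (b+1) * (N$i$j^a * N$i$l^e * N$k$l^b)
      - real (b+1) * (N$i$j^a * N$i$l^(e+2) * N$k$l^b)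
      - (real b + real CARD('n) - 1) * (N$i$j^a * N$i$l^e * N$k$l^(b+2)) \<partial>\<mu>)"
    apply (rule integral_cong_AE)
    apply (rule cont_meas[OF H], intro continuous_intros)
    apply (rule cont_meas[OF H], intro continuous_intros)
    using haar_basic(3)[OF H] by eventually_elim (rule pw)
  also have "\<dots> = real (b+1) * (\<integral>N. N$i$j^a * N$i$l^e * N$k$l^b \<partial>\<mu>)
      - real (b+1) * (\<integral>N. N$i$j^a * N$i$l^(e+2) * N$k$l^b \<partial>\<mu>)
      - (real b + real CARD('n) - 1) * (\<integral>N. N$i$j^a * N$i$l^e * N$k$l^(b+2) \<partial>\<mu>)"
    using Bochner_Integration.integral_diff[OF Bochner_Integration.integrable_diff[OF integrable_mult_right[OF mono_int[OF H, of i j a l e k b]]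
          integrable_mult_right[OF mono_int[OF H, of i j a l "e+2" k b]]] integrable_mult_right[OF mono_int[OF H, of i j a l e k "b+2"]]]
      Bochner_Integration.integral_diff[OF integrable_mult_right[OF mono_int[OF H, of i j a l e k b]]
          integrable_mult_right[OF mono_int[OF H, of i j a l "e+2" k b]]]
    by (simp only: integral_mult_right_zero)
  finally show ?thesis using Z by (simp add: algebra_simps)
qed

lemma dfact_nz: "dfact m \<noteq> 0" using dfact_pos[of m] by simp

lemma dfact_shift: "x = y + 2 \<Longrightarrow> z = y + 1 \<Longrightarrow> dfact x = real z * dfact y"
  using dfact_step[of y] by simp

definition cf :: "nat \<Rightarrow> nat \<Rightarrow> nat \<Rightarrow> nat \<Rightarrow> real" where
  "cf m a e b = dfact a * dfact e * dfact b * dfact (m+1) * dfact m * dfact (a+b+m)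
      / (dfact (a+e+b+m+1) * dfact (a+m) * dfact (b+m))"

lemma cf000: "cf m 0 0 0 = 1"
  unfolding cf_def by (simp add: dfact_0 dfact_nz)

lemma cfA: "cf m 0 (e+2) 0 = real (e+1) / real (e+m+2) * cf m 0 e 0"
proof -
  have 1: "dfact (e+2) = real (e+1) * dfact e" by (rule dfact_shift) simp_all
  have 2: "dfact (0 + (e+2) + 0 + m + 1) = real (e+m+2) * dfact (0+e+0+m+1)" by (rule dfact_shift) simp_all
  show ?thesis unfolding cf_def 1 2 times_divide_times_eq by (simp add: mult_ac)
qed

lemma cfB: "cf m (a+2) e 0 = real (a+1) / real (a+e+m+2) * cf m a e 0"
proof -
  have 1: "dfact (a+2) = real (a+1) * dfact a" by (rule dfact_shift) simp_all
  have 2: "dfact ((a+2) + e + 0 + m + 1) = real (a+e+m+2) * dfact (a+e+0+m+1)" by (rule dfact_shift) simp_all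
  have 3: "dfact ((a+2) + 0 + m) = real (a+m+1) * dfact (a+0+m)" by (rule dfact_shift) simp_all
  have 4: "dfact ((a+2) + m) = real (a+m+1) * dfact (a+m)" by (rule dfact_shift) simp_all
  have 5: "real (a+m+1) * X / (Y * (real (a+m+1) * Z)) = X / (Y * Z)" for X Y Z :: real
  proof -
    have c: "real (a+m+1) \<noteq> 0" by simp
    have "Y * (real (a+m+1) * Z) = real (a+m+1) * (Y * Z)" by (rule mult.left_commute)
    then show ?thesis using mult_divide_mult_cancel_left[OF c] by simp
  qed
  show ?thesis unfolding cf_def 1 2 3 4 times_divide_times_eq
    by (simp add: mult_ac 5)
qed

lemma alg_C: "(S::real) > 0 \<Longrightarrow> S = E + T \<Longrightarrow> (B*T/(S*W))*h = B/W*(h - E/S*h)"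
  by (cases "W = 0") (simp_all add: field_simps)

lemma cfC: "cf m a e (b+2) = real (b+1) / real (b+m+1) * (cf m a e b - cf m a (e+2) b)"
proof -
  have 1: "dfact (b+2) = real (b+1) * dfact b" by (rule dfact_shift) simp_all
  have 2: "dfact (a + (b+2) + m) = real (a+b+m+1) * dfact (a+b+m)" by (rule dfact_shift) simp_all
  have 3: "dfact (a + e + (b+2) + m + 1) = real (a+e+b+m+2) * dfact (a+e+b+m+1)" by (rule dfact_shift) simp_all
  have 4: "dfact ((b+2) + m) = real (b+m+1) * dfact (b+m)" by (rule dfact_shift) simp_all
  have 5: "dfact (e+2) = real (e+1) * dfact e" by (rule dfact_shift) simp_all
  have 6: "dfact (a + (e+2) + b + m + 1) = real (a+e+b+m+2) * dfact (a+e+b+m+1)" by (rule dfact_shift) simp_all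
  have X: "cf m a e (b+2) = (real (b+1) * real (a+b+m+1) / (real (a+e+b+m+2) * real (b+m+1))) * cf m a e b"
    unfolding cf_def 1 2 3 4 times_divide_times_eq by (simp add: mult_ac)
  have Y: "cf m a (e+2) b = real (e+1) / real (a+e+b+m+2) * cf m a e b"
    unfolding cf_def 5 6 times_divide_times_eq by (simp add: mult_ac)
  show ?thesis unfolding X Y by (rule alg_C) simp_all
qed

definition mom :: "(real^'n^'n) measure \<Rightarrow> 'n \<Rightarrow> 'n \<Rightarrow> 'n \<Rightarrow> 'n \<Rightarrow> nat \<Rightarrow> nat \<Rightarrow> nat \<Rightarrow> real" where
  "mom \<mu> i j l k a e b = (\<integral>N. N$i$j^a * N$i$l^e * N$k$l^b \<partial>\<mu>)"

lemma solve_step: "(A::real) \<noteq> 0 \<Longrightarrow> A * X = B * Y \<Longrightarrow> Y = c \<Longrightarrow> X = B / A * c"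
  by (simp add: field_simps)

lemma P0:
  fixes \<mu> :: "(real^'n^'n) measure"
  assumes H: "haar_orthogonal \<mu>" and jl: "j \<noteq> l" and n: "CARD('n) = m + 2"
  shows "mom \<mu> i j l i 0 (2*q) 0 = cf m 0 (2*q) 0"
proof (induction q)
  case 0
  interpret prob_space \<mu> using haar_basic[OF H] by auto
  show ?case by (simp add: mom_def cf000 prob_space)
next
  case (Suc q)
  have lj: "l \<noteq> j" using jl by auto
  have r: "(real (2*q) + real m + 2) * mom \<mu> i j l i 0 (2*q+2) 0 = real (2*q+1) * mom \<mu> i j l i 0 (2*q) 0"
    using R1[OF H lj, of "2*q" 0 i] n by (simp add: mom_def add_ac)
  have "mom \<mu> i j l i 0 (2*q+2) 0 = real (2*q+1) / (real (2*q) + real m + 2) * cf m 0 (2*q) 0"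
    by (rule solve_step[OF _ r Suc]) simp
  also have "\<dots> = cf m 0 (2*q+2) 0" using cfA[of m "2*q"] by simp
  finally show ?case by simp
qed

lemma P:
  fixes \<mu> :: "(real^'n^'n) measure"
  assumes H: "haar_orthogonal \<mu>" and jl: "j \<noteq> l" and n: "CARD('n) = m + 2"
  shows "mom \<mu> i j l i (2*p) (2*q) 0 = cf m (2*p) (2*q) 0"
proof (induction p arbitrary: q)
  case 0
  show ?case using P0[OF H jl n] by simp
next
  case (Suc p)
  have r: "(real (2*p) + real (2*q) + real m + 2) * mom \<mu> i j l i (2*p+2) (2*q) 0 = real (2*p+1) * mom \<mu> i j l i (2*p) (2*q) 0"
    using R1[OF H jl, of "2*p" "2*q" i] n by (simp add: mom_def add_ac)
  have "mom \<mu> i j l i (2*p+2) (2*q) 0 = real (2*p+1) / (real (2*p) + real (2*q) + real m + 2) * cf m (2*p) (2*q) 0"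
    by (rule solve_step[OF _ r Suc]) simp
  also have "\<dots> = cf m (2*p+2) (2*q) 0" using cfB[of m "2*p" "2*q"] by simp
  finally show ?case by simp
qed

lemma Hc:
  fixes \<mu> :: "(real^'n^'n) measure"
  assumes H: "haar_orthogonal \<mu>" and jl: "j \<noteq> l" and ik: "i \<noteq> k" and n: "CARD('n) = m + 2"
  shows "mom \<mu> i j l k (2*p) (2*e) (2*q) = cf m (2*p) (2*e) (2*q)"
proof (induction q arbitrary: e)
  case 0
  have "mom \<mu> i j l k (2*p) (2*e) 0 = mom \<mu> i j l i (2*p) (2*e) 0" by (simp add: mom_def)
  then show ?case using P[OF H jl n] by simp
next
  case (Suc q)
  have n2: "CARD('n) \<ge> 2" using n by simp
  have r: "(real (2*q) + real m + 1) * mom \<mu> i j l k (2*p) (2*e) (2*q+2)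
      = real (2*q+1) * (mom \<mu> i j l k (2*p) (2*e) (2*q) - mom \<mu> i j l k (2*p) (2*e+2) (2*q))"
    using R2[OF H ik n2, where b="2*q" and a="2*p" and e="2*e" and j=j and l=l] n by (simp add: mom_def add_ac)
  have IH2: "mom \<mu> i j l k (2*p) (2*e+2) (2*q) = cf m (2*p) (2*e+2) (2*q)"
  proof -
    have ee: "2*(e+1) = 2*e+2" by simp
    show ?thesis using Suc[of "e+1"] unfolding ee .
  qed
  have "mom \<mu> i j l k (2*p) (2*e) (2*q+2) = real (2*q+1) / (real (2*q) + real m + 1)
      * (cf m (2*p) (2*e) (2*q) - cf m (2*p) (2*e+2) (2*q))"
    by (rule solve_step[OF _ r]) (simp, simp only: Suc.IH IH2)
  also have "\<dots> = cf m (2*p) (2*e) (2*q+2)" using cfC[of m "2*p" "2*e" "2*q"] by simp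
  finally show ?case by simp
qed

definition flip :: "'n \<Rightarrow> real^'n^'n" where
  "flip i = (\<chi> a b. if a = b then (if a = i then -1 else 1) else 0)"

lemma flip_mult: "(flip i ** M)$a$b = (if a = i then - M$a$b else M$a$b)"
  by (simp add: flip_def matrix_matrix_mult_def if_distrib[of "\<lambda>x. x * _"] cong: if_cong)

lemma flip_orth: "orthogonal_matrix (flip i)"
proof -
  have t: "transpose (flip i) = flip i" by (auto simp: flip_def transpose_def vec_eq_iff)
  have "flip i ** flip i = mat 1" unfolding vec_eq_iff flip_mult by (auto simp: flip_def mat_def)
  then show ?thesis unfolding orthogonal_matrix t .
qed

lemma odd_zero:
  fixes \<mu> :: "(real^'n^'n) measure"
  fixes F :: "real^'n^'n \<Rightarrow> real"
  assumes H: "haar_orthogonal \<mu>" and F: "\<And>N. F (flip r ** N) = - F N" and c: "continuous_on UNIV F"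
  shows "(\<integral>N. F N \<partial>\<mu>) = 0"
proof -
  have "(\<integral>N. F (flip r ** N) \<partial>\<mu>) = (\<integral>N. F N \<partial>\<mu>)"
    by (rule haar_inv[OF H flip_orth borel_measurable_continuous_onI[OF c]])
  then show ?thesis unfolding F by simp
qed

theorem corollary4p5:
  fixes \<mu> :: "(real^'n^'n) measure" and i j k l :: 'n and \<alpha> \<beta> :: nat
  assumes "CARD('n) \<ge> 2"
    and "haar_orthogonal \<mu>"
    and "i \<noteq> k" and "j \<noteq> l"
  shows "(even \<alpha> \<and> even \<beta> \<longrightarrow>
            (\<integral>M. (M $ i $ j) ^ \<alpha> * (M $ k $ l) ^ \<beta> \<partial>\<mu>) =
              fact (CARD('n) - 2) * dfact \<alpha> * dfact \<beta> * dfact (\<alpha> + \<beta> + CARD('n) - 2)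
              / (dfact (\<alpha> + CARD('n) - 2) * dfact (\<beta> + CARD('n) - 2)
                 * dfact (\<alpha> + \<beta> + CARD('n) - 1)))
       \<and> (odd \<alpha> \<or> odd \<beta> \<longrightarrow>
            (\<integral>M. (M $ i $ j) ^ \<alpha> * (M $ k $ l) ^ \<beta> \<partial>\<mu>) = 0)"
proof -
  note H = assms(2) and ik = assms(3) and jl = assms(4)
  obtain m where n: "CARD('n) = m + 2" using assms(1) by (metis le_add_diff_inverse2)
  have c: "continuous_on UNIV (\<lambda>M::real^'n^'n. (M $ i $ j) ^ \<alpha> * (M $ k $ l) ^ \<beta>)"
    by (intro continuous_intros)
  show ?thesis
  proof (intro conjI impI)
    assume "even \<alpha> \<and> even \<beta>"
    then obtain p q where a: "\<alpha> = 2*p" and b: "\<beta> = 2*q" by (auto elim!: evenE)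
    have "(\<integral>M. (M $ i $ j) ^ \<alpha> * (M $ k $ l) ^ \<beta> \<partial>\<mu>) = mom \<mu> i j l k (2*p) (2*0) (2*q)"
      by (simp add: mom_def a b)
    also have "\<dots> = cf m (2*p) (2*0) (2*q)" by (rule Hc[OF H jl ik n])
    also have "\<dots> = fact m * dfact \<alpha> * dfact \<beta> * dfact (\<alpha> + \<beta> + m)
              / (dfact (\<alpha> + m) * dfact (\<beta> + m) * dfact (\<alpha> + \<beta> + m + 1))"
      unfolding cf_def a b dfact_fact[symmetric] by (simp add: dfact_0 mult_ac)
    finally show "(\<integral>M. (M $ i $ j) ^ \<alpha> * (M $ k $ l) ^ \<beta> \<partial>\<mu>) =
              fact (CARD('n) - 2) * dfact \<alpha> * dfact \<beta> * dfact (\<alpha> + \<beta> + CARD('n) - 2)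
              / (dfact (\<alpha> + CARD('n) - 2) * dfact (\<beta> + CARD('n) - 2)
                 * dfact (\<alpha> + \<beta> + CARD('n) - 1))" using n by (simp add: add_ac)
  next
    assume "odd \<alpha> \<or> odd \<beta>"
    then show "(\<integral>M. (M $ i $ j) ^ \<alpha> * (M $ k $ l) ^ \<beta> \<partial>\<mu>) = 0"
    proof
      assume o: "odd \<alpha>"
      show ?thesis by (rule odd_zero[OF H _ c, where r=i]) (simp add: flip_mult ik ik[symmetric] o)
    next
      assume o: "odd \<beta>"
      show ?thesis by (rule odd_zero[OF H _ c, where r=k]) (simp add: flip_mult ik ik[symmetric] o)
    qed
  qed
qed

end
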